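(* Let $G$ be a simple, undirected, connected graph on $N$ vertices with edge set $E$ and degree sequence $d_1\le d_2\le\cdots\le d_N$. If $d_j=1$ for $1\le j\le M$, where $M<N$, then $$R^+(G)\ge N(N-2)+2|E|\left[M+\frac{(N-M)^2}{2|E|-M}\right]-2|E|.$$
   Context: For vertices $i,j$ of $G$, $R_{ij}$ denotes the effective resistance between $i$ and $j$ when every edge of $G$ is a unit resistor. The additive degree-Kirchhoff index is $R^+(G)=\sum_{i<j}(d_i+d_j)R_{ij}$, where $d_i$ is the degree of vertex $i$. *)

theory Defs
  imports Main "HOL-Library.Transitive_Closure_Table" Complex_Main
begin

definition simple_graph :: "nat \<Rightarrow> (nat \<Rightarrow> nat \<Rightarrow> bool) \<Rightarrow> bool" where
  "simple_graph N E \<longleftrightarrow> (\<forall>i j. E i j \<longrightarrow> i < N \<and> j < N) \<and>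
     (\<forall>i j. E i j \<longrightarrow> E j i) \<and> (\<forall>i. \<not> E i i)"

definition connected_graph :: "nat \<Rightarrow> (nat \<Rightarrow> nat \<Rightarrow> bool) \<Rightarrow> bool" where
  "connected_graph N E \<longleftrightarrow> (\<forall>i<N. \<forall>j<N. E\<^sup>*\<^sup>* i j)"

definition degree :: "nat \<Rightarrow> (nat \<Rightarrow> nat \<Rightarrow> bool) \<Rightarrow> nat \<Rightarrow> nat" where
  "degree N E i = card {j. j < N \<and> E i j}"

definition num_edges :: "nat \<Rightarrow> (nat \<Rightarrow> nat \<Rightarrow> bool) \<Rightarrow> nat" where
  "num_edges N E = card {(i, j). i < j \<and> j < N \<and> E i j}"

text \<open>Effective resistance between i and j with unit resistors on all edges:
  the potential difference v i - v j, where v is a potential satisfying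
  Kirchhoff's laws when a unit current enters at i and leaves at j
  (i.e. L v = e_i - e_j for the graph Laplacian L).\<close>

definition eff_resistance :: "nat \<Rightarrow> (nat \<Rightarrow> nat \<Rightarrow> bool) \<Rightarrow> nat \<Rightarrow> nat \<Rightarrow> real" where
  "eff_resistance N E i j = (THE r. \<exists>v :: nat \<Rightarrow> real.
      (\<forall>x<N. (\<Sum>y\<in>{y. y < N \<and> E x y}. v x - v y) =
              (if x = i then 1 else 0) - (if x = j then 1 else 0)) \<and>
      r = v i - v j)"

definition additive_degree_kirchhoff :: "nat \<Rightarrow> (nat \<Rightarrow> nat \<Rightarrow> bool) \<Rightarrow> real" where
  "additive_degree_kirchhoff N E =
     (\<Sum>j<N. \<Sum>i<j. (real (degree N E i) + real (degree N E j)) * eff_resistance N E i j)"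

end

theory Submission
  imports "Jordan_Normal_Form.Determinant" Defs
begin

definition lap :: "nat \<Rightarrow> (nat \<Rightarrow> nat \<Rightarrow> bool) \<Rightarrow> (nat \<Rightarrow> real) \<Rightarrow> nat \<Rightarrow> real" where
  "lap N E v x = (\<Sum>y\<in>{y. y < N \<and> E x y}. v x - v y)"

lemma nb_sum_if:
  fixes N :: nat and E :: "nat \<Rightarrow> nat \<Rightarrow> bool"
  shows
  "(\<Sum>y\<in>{y. y < N \<and> E z y}. f y) = (\<Sum>y<N. if E z y then f y else 0)"
proof -
  have "{y. y < N \<and> E z y} = {y\<in>{..<N}. E z y}" by auto
  hence "(\<Sum>y\<in>{y. y < N \<and> E z y}. f y) = (\<Sum>y\<in>{y\<in>{..<N}. E z y}. f y)" by simp
  also have "\<dots> = (\<Sum>y<N. if E z y then f y else 0)" by (subst sum.inter_filter[symmetric]) auto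
  finally show ?thesis .
qed

lemma swap_nb:
  assumes sg: "simple_graph N E"
  shows "(\<Sum>x<N. \<Sum>y\<in>{y. y < N \<and> E x y}. g x y) = (\<Sum>x<N. \<Sum>y\<in>{y. y < N \<and> E x y}. g y x)"
proof -
  have sym: "E x y = E y x" for x y using sg unfolding simple_graph_def by blast
  have "(\<Sum>x<N. \<Sum>y\<in>{y. y < N \<and> E x y}. g x y) = (\<Sum>x<N. \<Sum>y<N. if E x y then g x y else 0)"
    by (simp add: nb_sum_if)
  also have "\<dots> = (\<Sum>y<N. \<Sum>x<N. if E x y then g x y else 0)" by (rule sum.swap)
  also have "\<dots> = (\<Sum>y<N. \<Sum>x<N. if E y x then g x y else 0)" using sym by simp
  also have "\<dots> = (\<Sum>x<N. \<Sum>y\<in>{y. y < N \<and> E x y}. g y x)" by (simp add: nb_sum_if)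
  finally show ?thesis .
qed

lemma sum_lap:
  assumes sg: "simple_graph N E"
  shows "(\<Sum>x<N. lap N E v x) = 0"
proof -
  have "(\<Sum>x<N. lap N E v x) = (\<Sum>x<N. \<Sum>y\<in>{y. y < N \<and> E x y}. v x - v y)"
    by (simp add: lap_def)
  also have "\<dots> = (\<Sum>x<N. \<Sum>y\<in>{y. y < N \<and> E x y}. v y - v x)" by (rule swap_nb[OF sg])
  also have "\<dots> = - (\<Sum>x<N. \<Sum>y\<in>{y. y < N \<and> E x y}. v x - v y)"
    by (simp add: sum_negf[symmetric])
  finally show ?thesis using \<open>(\<Sum>x<N. lap N E v x) = _\<close> by linarith
qed

lemma energy:
  assumes sg: "simple_graph N E"
  shows "(\<Sum>x<N. u x * lap N E u x) = (\<Sum>x<N. \<Sum>y\<in>{y. y < N \<and> E x y}. (u x - u y)^2) / 2"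
proof -
  have a: "(\<Sum>x<N. u x * lap N E u x) = (\<Sum>x<N. \<Sum>y\<in>{y. y < N \<and> E x y}. u x * (u x - u y))"
    by (simp add: lap_def sum_distrib_left)
  also have b: "\<dots> = (\<Sum>x<N. \<Sum>y\<in>{y. y < N \<and> E x y}. u y * (u y - u x))" by (rule swap_nb[OF sg])
  finally have "2 * (\<Sum>x<N. u x * lap N E u x) =
     (\<Sum>x<N. \<Sum>y\<in>{y. y < N \<and> E x y}. u x * (u x - u y)) + (\<Sum>x<N. \<Sum>y\<in>{y. y < N \<and> E x y}. u y * (u y - u x))"
    using a by linarith
  also have "\<dots> = (\<Sum>x<N. \<Sum>y\<in>{y. y < N \<and> E x y}. (u x - u y)^2)"
    by (simp add: sum.distrib[symmetric] power2_eq_square algebra_simps)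
  finally show ?thesis by simp
qed

lemma sg_bounds: "simple_graph N E \<Longrightarrow> E x y \<Longrightarrow> x < N \<and> y < N"
  unfolding simple_graph_def by blast

lemma harmonic_const:
  assumes sg: "simple_graph N E" and cg: "connected_graph N E"
    and h: "\<forall>x<N. lap N E u x = 0" and i: "i < N" and j: "j < N"
  shows "u i = u j"
proof -
  have "(\<Sum>x<N. \<Sum>y\<in>{y. y < N \<and> E x y}. (u x - u y)^2) = 0"
    using energy[OF sg, of u] h by simp
  hence z: "\<forall>x\<in>{..<N}. (\<Sum>y\<in>{y. y < N \<and> E x y}. (u x - u y)^2) = 0"
    by (subst sum_nonneg_eq_0_iff[symmetric]) (auto intro: sum_nonneg)
  have e: "u x = u y" if "E x y" for x y
  proof -
    from sg_bounds[OF sg that] have "x < N" "y < N" by auto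
    with z have "(\<Sum>y\<in>{y. y < N \<and> E x y}. (u x - u y)^2) = 0" by auto
    hence "\<forall>y\<in>{y. y < N \<and> E x y}. (u x - u y)^2 = 0"
      by (subst sum_nonneg_eq_0_iff[symmetric]) auto
    with \<open>y < N\<close> that show ?thesis by auto
  qed
  from cg i j have "E\<^sup>*\<^sup>* i j" unfolding connected_graph_def by blast
  thus ?thesis
    by (induction rule: rtranclp_induct) (auto dest: e)
qed

definition lapmat :: "nat \<Rightarrow> (nat \<Rightarrow> nat \<Rightarrow> bool) \<Rightarrow> real mat" where
  "lapmat N E = mat N N (\<lambda>(x,y). (if x = y then real (degree N E x) else 0) - (if E x y then 1 else 0) + 1)"

lemma lap_alt:
  fixes N :: nat and E :: "nat \<Rightarrow> nat \<Rightarrow> bool"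
  shows "lap N E f x = real (degree N E x) * f x - (\<Sum>k<N. if E x k then f k else 0)"
proof -
  have "lap N E f x = (\<Sum>y\<in>{y. y < N \<and> E x y}. f x) - (\<Sum>y\<in>{y. y < N \<and> E x y}. f y)"
    unfolding lap_def by (rule sum_subtractf)
  also have "(\<Sum>y\<in>{y. y < N \<and> E x y}. f x) = real (degree N E x) * f x"
    by (simp add: degree_def)
  also have "(\<Sum>y\<in>{y. y < N \<and> E x y}. f y) = (\<Sum>k<N. if E x k then f k else 0)"
    by (rule nb_sum_if)
  finally show ?thesis .
qed

lemma lapmat_apply:
  assumes x: "x < N"
  shows "(lapmat N E *\<^sub>v vec N f) $ x = lap N E f x + (\<Sum>y<N. f y)"
proof -
  have "(lapmat N E *\<^sub>v vec N f) $ x =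
     (\<Sum>k\<in>{0..<N}. ((if x = k then real (degree N E x) else 0) - (if E x k then 1 else 0) + 1) * f k)"
    using x unfolding lapmat_def apply simp unfolding scalar_prod_def by simp
  also have "\<dots> = (\<Sum>k<N. (if x = k then real (degree N E x) * f k else 0))
        - (\<Sum>k<N. if E x k then f k else 0) + (\<Sum>k<N. f k)"
  proof -
    have "\<And>k. ((if x = k then real (degree N E x) else 0) - (if E x k then 1 else 0) + 1) * f k
       = (if x = k then real (degree N E x) * f k else 0) - (if E x k then f k else 0) + f k"
      by (simp add: algebra_simps)
    hence "(\<Sum>k\<in>{0..<N}. ((if x = k then real (degree N E x) else 0) - (if E x k then 1 else 0) + 1) * f k)
       = (\<Sum>k<N. (if x = k then real (degree N E x) * f k else 0) - (if E x k then f k else 0) + f k)"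
      by (simp only: atLeast0LessThan)
    also have "\<dots> = (\<Sum>k<N. (if x = k then real (degree N E x) * f k else 0))
        - (\<Sum>k<N. if E x k then f k else 0) + (\<Sum>k<N. f k)"
      by (simp only: sum.distrib sum_subtractf)
    finally show ?thesis .
  qed
  also have "(\<Sum>k<N. (if x = k then real (degree N E x) * f k else 0)) = real (degree N E x) * f x"
    using x by (simp add: sum.delta')
  finally show ?thesis by (simp add: lap_alt)
qed

lemma lapmat_carrier: "lapmat N E \<in> carrier_mat N N"
  by (simp add: lapmat_def)

lemma lap_exists:
  assumes sg: "simple_graph N E" and cg: "connected_graph N E" and N: "N > 0"
    and b: "(\<Sum>x<N. b x) = 0"
  shows "\<exists>v. \<forall>x<N. lap N E v x = b x"
proof -
  let ?A = "lapmat N E"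
  have key: "(\<Sum>y<N. f y) = 0 \<and> (\<forall>x<N. lap N E f x = c x)"
    if h: "\<forall>x<N. lap N E f x + (\<Sum>y<N. f y) = c x" and c: "(\<Sum>x<N. c x) = 0" for f c
  proof -
    have "(\<Sum>x<N. c x) = (\<Sum>x<N. lap N E f x + (\<Sum>y<N. f y))" using h by simp
    also have "\<dots> = (\<Sum>x<N. lap N E f x) + real N * (\<Sum>y<N. f y)" by (simp add: sum.distrib)
    finally have "real N * (\<Sum>y<N. f y) = 0" using c sum_lap[OF sg, of f] by simp
    with N have s: "(\<Sum>y<N. f y) = 0" by simp
    with h show ?thesis by simp
  qed
  have inj: "v = 0\<^sub>v N" if v: "v \<in> carrier_vec N" and Av: "?A *\<^sub>v v = 0\<^sub>v N" for v
  proof -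
    define f where "f k = v $ k" for k
    have vf: "vec N f = v" using v by (auto simp: f_def)
    have "\<forall>x<N. lap N E f x + (\<Sum>y<N. f y) = 0"
    proof (intro allI impI)
      fix x assume x: "x < N"
      have "(?A *\<^sub>v vec N f) $ x = 0" using Av vf x by simp
      thus "lap N E f x + (\<Sum>y<N. f y) = 0" using lapmat_apply[OF x] by simp
    qed
    from key[OF this] have s: "(\<Sum>y<N. f y) = 0" and l: "\<forall>x<N. lap N E f x = 0" by auto
    have c: "f x = f 0" if "x < N" for x using harmonic_const[OF sg cg l that N] .
    have "(\<Sum>y<N. f y) = (\<Sum>y<N. f 0)" by (rule sum.cong) (auto intro: c)
    hence "(\<Sum>y<N. f y) = real N * f 0" by simp
    with s N have f0: "f 0 = 0" by simp
    have "\<forall>x<N. f x = 0" using c f0 by metis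
    thus ?thesis using v by (intro eq_vecI) (auto simp: f_def)
  qed
  have "det ?A \<noteq> 0"
    using det_0_iff_vec_prod_zero_field[OF lapmat_carrier[of N E]] inj by blast
  from det_non_zero_imp_unit[OF lapmat_carrier this, unfolded Units_def, of "()"]
  obtain B where B: "B \<in> carrier_mat N N" and AB: "?A * B = 1\<^sub>m N"
    by (auto simp: ring_mat_def)
  define w where "w = B *\<^sub>v vec N b"
  have wc: "w \<in> carrier_vec N" using B by (simp add: w_def)
  have Aw: "?A *\<^sub>v w = vec N b"
    unfolding w_def using B lapmat_carrier[of N E]
    by (simp add: assoc_mult_mat_vec[symmetric, of _ N N _ N] AB)
  define f where "f k = w $ k" for k
  have wf: "vec N f = w" using wc by (auto simp: f_def)
  have "\<forall>x<N. lap N E f x + (\<Sum>y<N. f y) = b x"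
  proof (intro allI impI)
    fix x assume x: "x < N"
    have "(?A *\<^sub>v vec N f) $ x = b x" using Aw wf x by simp
    thus "lap N E f x + (\<Sum>y<N. f y) = b x" using lapmat_apply[OF x] by simp
  qed
  from key[OF this b] show ?thesis by blast
qed

lemma lap_diff: "lap N E (\<lambda>x. v x - w x) x = lap N E v x - lap N E w x"
  unfolding lap_def by (simp add: sum_subtractf[symmetric] algebra_simps)

lemma eff_res_eq:
  assumes sg: "simple_graph N E" and cg: "connected_graph N E"
    and i: "i < N" and j: "j < N"
    and hv: "\<forall>x<N. lap N E v x = (if x = i then 1 else 0) - (if x = j then 1 else 0)"
  shows "eff_resistance N E i j = v i - v j"
  unfolding eff_resistance_def
proof (rule the_equality)
  show "\<exists>w :: nat \<Rightarrow> real. (\<forall>x<N. (\<Sum>y\<in>{y. y < N \<and> E x y}. w x - w y) =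
              (if x = i then 1 else 0) - (if x = j then 1 else 0)) \<and> v i - v j = w i - w j"
    using hv unfolding lap_def by blast
next
  fix r assume "\<exists>w :: nat \<Rightarrow> real. (\<forall>x<N. (\<Sum>y\<in>{y. y < N \<and> E x y}. w x - w y) =
              (if x = i then 1 else 0) - (if x = j then 1 else 0)) \<and> r = w i - w j"
  then obtain w where hw: "\<forall>x<N. lap N E w x = (if x = i then 1 else 0) - (if x = j then 1 else 0)"
    and r: "r = w i - w j" unfolding lap_def by blast
  have "\<forall>x<N. lap N E (\<lambda>x. v x - w x) x = 0" using hv hw by (simp add: lap_diff)
  from harmonic_const[OF sg cg this i j] have "v i - w i = v j - w j" .
  thus "r = v i - v j" using r by simp
qed

definition Tq :: "nat \<Rightarrow> (nat \<Rightarrow> nat \<Rightarrow> bool) \<Rightarrow> (nat \<Rightarrow> real) \<Rightarrow> nat \<Rightarrow> real" where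
  "Tq N E v x = (\<Sum>y\<in>{y. y < N \<and> E x y}. (v x - v y)^2)"

lemma Tq_nonneg: "Tq N E v x \<ge> 0"
  unfolding Tq_def by (auto intro: sum_nonneg)

lemma res_energy:
  assumes sg: "simple_graph N E" and i: "i < N" and j: "j < N"
    and hv: "\<forall>x<N. lap N E v x = (if x = i then 1 else 0) - (if x = j then 1 else 0)"
  shows "v i - v j = (\<Sum>x<N. Tq N E v x) / 2"
proof -
  have "(\<Sum>x<N. v x * lap N E v x) = (\<Sum>x<N. (if x = i then v x else 0) - (if x = j then v x else 0))"
  proof (intro sum.cong refl)
    fix x assume "x \<in> {..<N}"
    hence "lap N E v x = (if x = i then 1 else 0) - (if x = j then 1 else 0)" using hv by simp
    thus "v x * lap N E v x = (if x = i then v x else 0) - (if x = j then v x else 0)"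
      by simp
  qed
  also have "\<dots> = (\<Sum>x<N. (if x = i then v x else 0)) - (\<Sum>x<N. (if x = j then v x else 0))"
    by (rule sum_subtractf)
  also have "\<dots> = v i - v j" using i j by (simp add: sum.delta)
  finally show ?thesis using energy[OF sg, of v] unfolding Tq_def by simp
qed

lemma weight_bound:
  assumes sg: "simple_graph N E" and w0: "\<And>x. w x \<ge> 0"
    and w1: "\<And>x y. E x y \<Longrightarrow> w x + w y \<le> 1"
  shows "(\<Sum>x<N. Tq N E v x) \<ge> 2 * (\<Sum>x<N. w x * Tq N E v x)"
proof -
  have "(\<Sum>x<N. Tq N E v x) = (\<Sum>x<N. \<Sum>y\<in>{y. y < N \<and> E x y}. (v x - v y)^2)"
    by (simp add: Tq_def)
  also have "\<dots> \<ge> (\<Sum>x<N. \<Sum>y\<in>{y. y < N \<and> E x y}. (w x + w y) * (v x - v y)^2)"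
  proof (intro sum_mono)
    fix x y assume "y \<in> {y. y < N \<and> E x y}"
    hence "w x + w y \<le> 1" using w1 by auto
    thus "(w x + w y) * (v x - v y)^2 \<le> (v x - v y)^2"
      using mult_right_mono[of "w x + w y" 1 "(v x - v y)^2"] by simp
  qed
  also have "(\<Sum>x<N. \<Sum>y\<in>{y. y < N \<and> E x y}. (w x + w y) * (v x - v y)^2)
     = (\<Sum>x<N. \<Sum>y\<in>{y. y < N \<and> E x y}. w x * (v x - v y)^2)
       + (\<Sum>x<N. \<Sum>y\<in>{y. y < N \<and> E x y}. w y * (v x - v y)^2)"
    by (simp add: sum.distrib[symmetric] algebra_simps)
  also have "(\<Sum>x<N. \<Sum>y\<in>{y. y < N \<and> E x y}. w y * (v x - v y)^2)
      = (\<Sum>x<N. \<Sum>y\<in>{y. y < N \<and> E x y}. w x * (v y - v x)^2)"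
    by (rule swap_nb[OF sg])
  also have "\<dots> = (\<Sum>x<N. \<Sum>y\<in>{y. y < N \<and> E x y}. w x * (v x - v y)^2)"
    by (simp add: power2_commute)
  also have "(\<Sum>x<N. \<Sum>y\<in>{y. y < N \<and> E x y}. w x * (v x - v y)^2) = (\<Sum>x<N. w x * Tq N E v x)"
    by (simp add: Tq_def sum_distrib_left)
  finally show ?thesis by simp
qed

lemma cs_sum:
  fixes a :: "nat \<Rightarrow> real"
  assumes A: "finite A" "A \<noteq> {}"
  shows "(\<Sum>y\<in>A. a y)^2 / real (card A) \<le> (\<Sum>y\<in>A. (a y)^2)"
proof -
  define n where "n = real (card A)"
  define s where "s = (\<Sum>y\<in>A. a y)"
  have n: "n > 0" using A by (simp add: n_def card_gt_0_iff)
  have "0 \<le> (\<Sum>y\<in>A. (a y - s / n)^2)" by (auto intro: sum_nonneg)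
  also have "\<dots> = (\<Sum>y\<in>A. (a y)^2 - 2 * (s/n) * a y + (s/n)^2)"
    by (rule sum.cong) (auto simp: power2_diff field_simps)
  also have "\<dots> = (\<Sum>y\<in>A. (a y)^2) - 2 * (s/n) * s + n * (s/n)^2"
  proof -
    have "(\<Sum>y\<in>A. 2 * (s/n) * a y) = 2 * (s/n) * s"
      unfolding s_def by (rule sum_distrib_left[symmetric])
    thus ?thesis by (simp only: sum.distrib sum_subtractf) (simp add: n_def)
  qed
  also have "\<dots> = (\<Sum>y\<in>A. (a y)^2) - s^2 / n"
    using n by (simp add: field_simps power2_eq_square)
  finally show ?thesis by (simp add: s_def n_def)
qed

lemma vertex_bound:
  assumes hl: "lap N E v x = c" and c: "c^2 = 1"
  shows "real (degree N E x) \<ge> 1 \<and> Tq N E v x \<ge> 1 / real (degree N E x)"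
proof -
  let ?A = "{y. y < N \<and> E x y}"
  have fin: "finite ?A" by simp
  have ne: "?A \<noteq> {}"
  proof
    assume e: "?A = {}"
    have "lap N E v x = 0" unfolding lap_def by (simp only: e sum.empty)
    with hl c show False by simp
  qed
  have d: "degree N E x = card ?A" by (simp add: degree_def)
  have "card ?A \<ge> 1" using fin ne by (simp add: Suc_le_eq card_gt_0_iff)
  moreover have "(\<Sum>y\<in>?A. v x - v y)^2 / real (card ?A) \<le> Tq N E v x"
    unfolding Tq_def by (rule cs_sum[OF fin ne])
  ultimately show ?thesis using hl c d by (simp add: lap_def)
qed

lemma arith1:
  fixes p q R :: real
  assumes "p \<ge> 1" "q \<ge> 1" "R \<ge> 1/p + 1/q"
  shows "(p + q) * R \<ge> 2 + p/q + q/p"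
proof -
  have "(p + q) * R \<ge> (p + q) * (1/p + 1/q)" using assms by (intro mult_left_mono) auto
  also have "(p + q) * (1/p + 1/q) = 2 + p/q + q/p" using assms by (simp add: field_simps)
  finally show ?thesis .
qed

lemma arith2_aux:
  fixes p q R :: real
  assumes "p \<ge> 1" "q \<ge> p" "R \<ge> 1/p"
  shows "(p + q) * R \<ge> p/q + q/p"
proof -
  have "(p + q) * R \<ge> (p + q) * (1/p)" using assms by (intro mult_left_mono) auto
  also have "(p + q) * (1/p) = 1 + q/p" using assms by (simp add: field_simps)
  also have "p/q \<le> 1" using assms by simp
  ultimately show ?thesis by linarith
qed

lemma arith2:
  fixes p q R :: real
  assumes "p \<ge> 1" "q \<ge> 1" "R \<ge> 1/p" "R \<ge> 1/q"
  shows "(p + q) * R \<ge> p/q + q/p"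
proof (cases "p \<le> q")
  case True thus ?thesis using arith2_aux assms by blast
next
  case False
  hence "(q + p) * R \<ge> q/p + p/q" using arith2_aux[of q p R] assms by simp
  thus ?thesis by (simp add: add.commute)
qed

lemma pair_bound:
  assumes sg: "simple_graph N E" and cg: "connected_graph N E"
    and i: "i < N" and j: "j < N" and ij: "i \<noteq> j"
  shows "real (degree N E i) \<ge> 1 \<and> real (degree N E j) \<ge> 1 \<and>
    (real (degree N E i) + real (degree N E j)) * eff_resistance N E i j \<ge>
      2 + real (degree N E i) / real (degree N E j) + real (degree N E j) / real (degree N E i)
      - (if E i j then 2 else 0)"
proof -
  define p where "p = real (degree N E i)"
  define q where "q = real (degree N E j)"
  define b where "b x = (if x = i then 1 else 0) - (if x = j then (1::real) else 0)" for x
  have "(\<Sum>x<N. b x) = (\<Sum>x<N. if x = i then 1 else 0) - (\<Sum>x<N. if x = j then (1::real) else 0)"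
    unfolding b_def by (rule sum_subtractf)
  also have "\<dots> = 0" using i j by (simp add: sum.delta')
  finally have "(\<Sum>x<N. b x) = 0" .
  from lap_exists[OF sg cg _ this] i obtain v where hv0: "\<forall>x<N. lap N E v x = b x" by auto
  hence hv: "\<forall>x<N. lap N E v x = (if x = i then 1 else 0) - (if x = j then 1 else 0)"
    by (simp add: b_def)
  have R: "eff_resistance N E i j = (\<Sum>x<N. Tq N E v x) / 2"
    using eff_res_eq[OF sg cg i j hv] res_energy[OF sg i j hv] by simp
  have li: "lap N E v i = 1" using hv i ij by simp
  have lj: "lap N E v j = -1" using hv j ij by simp
  from vertex_bound[OF li] have p1: "p \<ge> 1" and Ti: "Tq N E v i \<ge> 1/p" by (auto simp: p_def)
  from vertex_bound[OF lj] have q1: "q \<ge> 1" and Tj: "Tq N E v j \<ge> 1/q" by (auto simp: q_def)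
  have noloop: "\<not> E x x" for x using sg unfolding simple_graph_def by blast
  have sym: "E x y \<Longrightarrow> E y x" for x y using sg unfolding simple_graph_def by blast
  have single: "(\<Sum>x<N. Tq N E v x) \<ge> 2 * Tq N E v k" if k: "k < N" for k
  proof -
    have "(\<Sum>x<N. Tq N E v x) \<ge> 2 * (\<Sum>x<N. (if x = k then 1 else 0) * Tq N E v x)"
      by (rule weight_bound[OF sg]) (auto simp: noloop)
    also have "(\<Sum>x<N. (if x = k then 1 else 0) * Tq N E v x) = (\<Sum>x<N. if x = k then Tq N E v x else 0)"
      by (intro sum.cong) auto
    also have "\<dots> = Tq N E v k" using k by (simp add: sum.delta')
    finally show ?thesis .
  qed
  have Ri: "eff_resistance N E i j \<ge> 1/p" using single[OF i] Ti R by simp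
  have Rj: "eff_resistance N E i j \<ge> 1/q" using single[OF j] Tj R by simp
  show ?thesis
  proof (cases "E i j")
    case True
    with arith2[OF p1 q1 Ri Rj] p1 q1 show ?thesis by (simp add: p_def q_def)
  next
    case False
    have "(\<Sum>x<N. Tq N E v x) \<ge> 2 * (\<Sum>x<N. (if x = i \<or> x = j then 1 else 0) * Tq N E v x)"
      by (rule weight_bound[OF sg]) (use False noloop sym in auto)
    also have "(\<Sum>x<N. (if x = i \<or> x = j then 1 else 0) * Tq N E v x)
        = (\<Sum>x<N. (if x = i then Tq N E v x else 0) + (if x = j then Tq N E v x else 0))"
      using ij by (intro sum.cong) auto
    also have "\<dots> = Tq N E v i + Tq N E v j"
      using i j by (simp add: sum.distrib sum.delta')
    finally have "eff_resistance N E i j \<ge> 1/p + 1/q" using Ti Tj R by simp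
    from arith1[OF p1 q1 this] False p1 q1 show ?thesis by (simp add: p_def q_def)
  qed
qed

lemma sym_pairs:
  fixes g :: "nat \<Rightarrow> nat \<Rightarrow> real"
  assumes sym: "\<And>i j. g i j = g j i"
  shows "(\<Sum>i<N. \<Sum>j<N. g i j) = 2 * (\<Sum>j<N. \<Sum>i<j. g i j) + (\<Sum>i<N. g i i)"
proof (induction N)
  case 0 thus ?case by simp
next
  case (Suc N)
  have "(\<Sum>i<Suc N. \<Sum>j<Suc N. g i j) = (\<Sum>i<N. \<Sum>j<N. g i j) + (\<Sum>i<N. g i N) + (\<Sum>j<N. g N j) + g N N"
    by (simp add: sum.distrib)
  also have "(\<Sum>j<N. g N j) = (\<Sum>i<N. g i N)" using sym by simp
  finally show ?case using Suc by simp
qed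

lemma card_filter_real:
  fixes P :: "nat \<Rightarrow> bool"
  shows "real (card {i. i < j \<and> P i}) = (\<Sum>i<j. if P i then 1 else 0)"
proof -
  have "{i. i < j \<and> P i} = {i\<in>{..<j}. P i}" by auto
  hence "real (card {i. i < j \<and> P i}) = (\<Sum>i\<in>{i\<in>{..<j}. P i}. 1)" by simp
  also have "\<dots> = (\<Sum>i<j. if P i then 1 else 0)" by (subst sum.inter_filter) auto
  finally show ?thesis .
qed

lemma num_edges_sum:
  "real (num_edges N E) = (\<Sum>j<N. \<Sum>i<j. if E i j then 1 else 0)"
proof -
  have eq: "{(i, j). i < j \<and> j < N \<and> E i j} = (\<lambda>(j,i). (i,j)) ` (SIGMA j:{..<N}. {i. i < j \<and> E i j})"
    by (auto simp: image_iff)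
  have inj: "inj_on (\<lambda>(j,i). (i,j)) (SIGMA j:{..<N}. {i. i < j \<and> E i j})"
    by (auto simp: inj_on_def)
  have "num_edges N E = card (SIGMA j:{..<N}. {i. i < j \<and> E i j})"
    unfolding num_edges_def eq by (rule card_image[OF inj])
  also have "\<dots> = (\<Sum>j<N. card {i. i < j \<and> E i j})" by (rule card_SigmaI) auto
  finally have "real (num_edges N E) = (\<Sum>j<N. real (card {i. i < j \<and> E i j}))" by simp
  also have "\<dots> = (\<Sum>j<N. \<Sum>i<j. if E i j then 1 else 0)" by (simp add: card_filter_real)
  finally show ?thesis .
qed

lemma degree_sum:
  fixes N :: nat and E :: "nat \<Rightarrow> nat \<Rightarrow> bool"
  shows "real (degree N E x) = (\<Sum>y<N. if E x y then 1 else 0)"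
proof -
  have "real (degree N E x) = (\<Sum>y\<in>{y. y < N \<and> E x y}. 1)" by (simp add: degree_def)
  also have "\<dots> = (\<Sum>y<N. if E x y then 1 else 0)" by (rule nb_sum_if)
  finally show ?thesis .
qed

lemma handshake:
  assumes sg: "simple_graph N E"
  shows "(\<Sum>x<N. real (degree N E x)) = 2 * real (num_edges N E)"
proof -
  have sym: "E x y = E y x" for x y using sg unfolding simple_graph_def by blast
  have nl: "\<not> E x x" for x using sg unfolding simple_graph_def by blast
  have "(\<Sum>x<N. real (degree N E x)) = (\<Sum>x<N. \<Sum>y<N. if E x y then 1 else 0)"
    by (simp add: degree_sum)
  also have "\<dots> = 2 * (\<Sum>j<N. \<Sum>i<j. if E i j then 1 else 0) + (\<Sum>i<N. if E i i then 1 else 0)"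
    by (rule sym_pairs) (simp add: sym)
  also have "\<dots> = 2 * real (num_edges N E)" by (simp add: nl num_edges_sum)
  finally show ?thesis .
qed

lemma ratio_ge2:
  fixes x y :: real
  assumes "x > 0" "y > 0"
  shows "x/y + y/x \<ge> 2"
proof -
  have "x/y + y/x - 2 = (x - y)^2 / (x*y)" using assms by (simp add: field_simps power2_eq_square)
  also have "\<dots> \<ge> 0" using assms by simp
  finally show ?thesis by simp
qed

lemma hm_am:
  fixes x :: "nat \<Rightarrow> real"
  assumes K: "finite K" and pos: "\<And>a. a \<in> K \<Longrightarrow> x a > 0"
  shows "(\<Sum>a\<in>K. x a) * (\<Sum>b\<in>K. 1 / x b) \<ge> (real (card K))^2"
proof -
  have P: "(\<Sum>a\<in>K. x a) * (\<Sum>b\<in>K. 1 / x b) = (\<Sum>a\<in>K. \<Sum>b\<in>K. x a / x b)"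
    by (simp add: sum_product)
  have sw: "(\<Sum>a\<in>K. \<Sum>b\<in>K. x a / x b) = (\<Sum>a\<in>K. \<Sum>b\<in>K. x b / x a)"
    by (rule sum.swap)
  have "2 * (\<Sum>a\<in>K. \<Sum>b\<in>K. x a / x b) = (\<Sum>a\<in>K. \<Sum>b\<in>K. x a / x b + x b / x a)"
    using sw by (simp add: sum.distrib)
  also have "\<dots> \<ge> (\<Sum>a\<in>K. \<Sum>b\<in>K. 2)"
    by (intro sum_mono ratio_ge2 pos)
  also have "(\<Sum>a\<in>K. \<Sum>b\<in>K. (2::real)) = 2 * (real (card K))^2"
    by (simp add: power2_eq_square)
  finally show ?thesis using P by simp
qed

theorem corollary3:
  fixes N M :: nat and E :: "nat \<Rightarrow> nat \<Rightarrow> bool" and d :: "nat \<Rightarrow> nat"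
  assumes "simple_graph N E"
    and "connected_graph N E"
    and "bij_betw d {1..N} {0..<N}"
    and "\<And>a b. \<lbrakk>a \<in> {1..N}; b \<in> {1..N}; a \<le> b\<rbrakk> \<Longrightarrow> degree N E (d a) \<le> degree N E (d b)"
    and "\<And>j. \<lbrakk>1 \<le> j; j \<le> M\<rbrakk> \<Longrightarrow> degree N E (d j) = 1"
    and "M < N"
  shows "additive_degree_kirchhoff N E \<ge>
    real N * (real N - 2)
    + 2 * real (num_edges N E) * (real M + (real N - real M)^2 / (2 * real (num_edges N E) - real M))
    - 2 * real (num_edges N E)"
proof -
  note sg = assms(1) and cg = assms(2) and bij = assms(3) and one = assms(5) and MN = assms(6)
  show ?thesis
  proof (cases "N = 1")
    case True
    have "{(i, j). i < j \<and> j < N \<and> E i j} = {}" using True by auto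
    hence "num_edges N E = 0" unfolding num_edges_def by (simp only: card.empty)
    thus ?thesis using True by (simp add: additive_degree_kirchhoff_def)
  next
    case False
    with MN have N2: "N \<ge> 2" by simp
    define dg where "dg x = real (degree N E x)" for x
    define D where "D = (\<Sum>x<N. dg x)"
    define S where "S = (\<Sum>x<N. 1 / dg x)"
    have dg1: "dg x \<ge> 1" if x: "x < N" for x
    proof -
      define y :: nat where "y = (if x = 0 then 1 else 0)"
      have "y < N" "x \<noteq> y" using N2 by (auto simp: y_def)
      from pair_bound[OF sg cg x this] show ?thesis by (simp add: dg_def)
    qed
    have Dne: "D = 2 * real (num_edges N E)" unfolding D_def dg_def by (rule handshake[OF sg])
    define g where "g i j = 2 + dg i / dg j + dg j / dg i - (if E i j then 2 else 0)" for i j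
    have symE: "E i j = E j i" for i j using sg unfolding simple_graph_def by blast
    have nl: "\<not> E i i" for i using sg unfolding simple_graph_def by blast
    have A: "additive_degree_kirchhoff N E \<ge> (\<Sum>j<N. \<Sum>i<j. g i j)"
      unfolding additive_degree_kirchhoff_def
    proof (intro sum_mono)
      fix j i assume j: "j \<in> {..<N}" and i: "i \<in> {..<j}"
      hence "i < N" "j < N" "i \<noteq> j" by auto
      from pair_bound[OF sg cg this] show "g i j \<le> (real (degree N E i) + real (degree N E j)) * eff_resistance N E i j"
        by (simp add: g_def dg_def)
    qed
    have B: "(\<Sum>i<N. \<Sum>j<N. g i j) = 2 * (\<Sum>j<N. \<Sum>i<j. g i j) + (\<Sum>i<N. g i i)"
      by (rule sym_pairs) (simp add: g_def symE)
    have diag: "(\<Sum>i<N. g i i) = 4 * real N"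
    proof -
      have "(\<Sum>i<N. g i i) = (\<Sum>i<N. 4)"
      proof (intro sum.cong refl)
        fix i assume "i \<in> {..<N}"
        hence "dg i \<ge> 1" using dg1 by simp
        thus "g i i = 4" by (simp add: g_def nl)
      qed
      thus ?thesis by simp
    qed
    have full: "(\<Sum>i<N. \<Sum>j<N. g i j) = 2 * real N ^ 2 + 2 * D * S - 2 * D"
    proof -
      have "(\<Sum>i<N. \<Sum>j<N. g i j) = (\<Sum>i<N. \<Sum>j<N. 2 + dg i * (1 / dg j) + dg j * (1 / dg i)
          - 2 * (if E i j then 1 else 0))"
        by (intro sum.cong refl) (simp add: g_def)
      also have "\<dots> = (\<Sum>i<N. \<Sum>j<N. 2) + (\<Sum>i<N. \<Sum>j<N. dg i * (1 / dg j))
          + (\<Sum>i<N. \<Sum>j<N. dg j * (1 / dg i)) - 2 * (\<Sum>i<N. \<Sum>j<N. if E i j then 1 else 0)"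
        by (simp add: sum.distrib sum_subtractf sum_distrib_left)
      also have "(\<Sum>i<N. \<Sum>j<N. dg i * (1 / dg j)) = D * S"
        by (simp add: D_def S_def sum_product)
      also have "(\<Sum>i<N. \<Sum>j<N. dg j * (1 / dg i)) = (\<Sum>j<N. \<Sum>i<N. dg j * (1 / dg i))"
        by (rule sum.swap)
      also have "\<dots> = D * S"
        by (simp add: D_def S_def sum_product)
      also have "(\<Sum>i<N. \<Sum>j<N. if E i j then (1::real) else 0) = D"
        by (simp add: D_def dg_def degree_sum)
      finally show ?thesis by (simp add: power2_eq_square)
    qed
    have pairs: "(\<Sum>j<N. \<Sum>i<j. g i j) = real N ^ 2 + D * S - D - 2 * real N"
      using B diag full by simp
    have split: "{1..N} = {1..M} \<union> {Suc M..N}" using MN by auto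
    have disj: "{1..M} \<inter> {Suc M..N} = {}" by auto
    have S_re: "S = (\<Sum>a\<in>{1..N}. 1 / dg (d a))"
      unfolding S_def using sum.reindex_bij_betw[OF bij, of "\<lambda>x. 1 / dg x"] by (simp add: atLeast0LessThan)
    have D_re: "D = (\<Sum>a\<in>{1..N}. dg (d a))"
      unfolding D_def using sum.reindex_bij_betw[OF bij, of "\<lambda>x. dg x"] by (simp add: atLeast0LessThan)
    have firstS: "(\<Sum>a\<in>{1..M}. 1 / dg (d a)) = real M"
    proof -
      have "(\<Sum>a\<in>{1..M}. 1 / dg (d a)) = (\<Sum>a\<in>{1..M}. 1)"
        by (intro sum.cong refl) (auto simp: dg_def one)
      thus ?thesis by simp
    qed
    have firstD: "(\<Sum>a\<in>{1..M}. dg (d a)) = real M"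
    proof -
      have "(\<Sum>a\<in>{1..M}. dg (d a)) = (\<Sum>a\<in>{1..M}. 1)"
        by (intro sum.cong refl) (auto simp: dg_def one)
      thus ?thesis by simp
    qed
    define K where "K = {Suc M..N}"
    have Kc: "card K = N - M" by (simp add: K_def)
    have dK: "d a < N" if "a \<in> K" for a
      using bij that unfolding K_def bij_betw_def by auto
    have posK: "dg (d a) > 0" if "a \<in> K" for a using dg1[OF dK[OF that]] by simp
    have S2: "S = real M + (\<Sum>a\<in>K. 1 / dg (d a))"
    proof -
      have "S = (\<Sum>a\<in>{1..M}. 1 / dg (d a)) + (\<Sum>a\<in>{Suc M..N}. 1 / dg (d a))"
        unfolding S_re split by (rule sum.union_disjoint) auto
      thus ?thesis unfolding firstS K_def .
    qed
    have D2: "D = real M + (\<Sum>a\<in>K. dg (d a))"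
    proof -
      have "D = (\<Sum>a\<in>{1..M}. dg (d a)) + (\<Sum>a\<in>{Suc M..N}. dg (d a))"
        unfolding D_re split by (rule sum.union_disjoint) auto
      thus ?thesis unfolding firstD K_def .
    qed
    have KD: "(\<Sum>a\<in>K. dg (d a)) > 0"
    proof -
      have "K \<noteq> {}" using MN by (simp add: K_def)
      thus ?thesis using posK by (intro sum_pos) (auto simp: K_def)
    qed
    have hm: "(\<Sum>a\<in>K. dg (d a)) * (\<Sum>a\<in>K. 1 / dg (d a)) \<ge> (real (card K))^2"
      by (rule hm_am) (auto simp: K_def intro: posK[unfolded K_def])
    have kk: "real (card K) = real N - real M" using Kc MN by simp
    have Sbound: "S \<ge> real M + (real N - real M)^2 / (D - real M)"
    proof -
      have "(real N - real M)^2 / (\<Sum>a\<in>K. dg (d a)) \<le> (\<Sum>a\<in>K. 1 / dg (d a))"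
        using hm KD kk by (simp add: divide_le_eq mult.commute)
      thus ?thesis using S2 D2 by simp
    qed
    have D0: "D \<ge> 0" using KD D2 by simp
    have "2 * real (num_edges N E) * (real M + (real N - real M)^2 / (2 * real (num_edges N E) - real M))
        \<le> D * S" using Sbound D0 Dne by (simp add: mult_left_mono)
    hence "real N * (real N - 2)
      + 2 * real (num_edges N E) * (real M + (real N - real M)^2 / (2 * real (num_edges N E) - real M))
      - 2 * real (num_edges N E) \<le> (\<Sum>j<N. \<Sum>i<j. g i j)"
      using pairs Dne by (simp add: power2_eq_square algebra_simps)
    with A show ?thesis by linarith
  qed
qed

end
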